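(* Let $\mathcal N=(\mathcal L,\mathcal I,D_{\mathcal L})$ be a network and let $R\in\mathcal R^{\mathcal N}$. Then for every $\epsilon>0$ there exists a collision-free schedule $S$ that has some period $T_p\ge 1$, whose rate vector $R_S$ exists, and which satisfies $R_S\succcurlyeq R-\epsilon$.
   Context: A network is a triple $\mathcal N=(\mathcal L,\mathcal I,D_{\mathcal L})$ where $\mathcal L$ is a finite nonempty set (of links); $\mathcal I=(\mathcal I(l))_{l\in\mathcal L}$ is the collision profile, each $\mathcal I(l)$ being a collection of nonempty subsets of $\mathcal L$; and $D_{\mathcal L}$ (the link-wise delay matrix) assigns an integer $D_{\mathcal L}(l,l')$ to every pair $(l,l')$ with $l'\in\phi$ for some $\phi\in\mathcal I(l)$. The character of $\mathcal N$ is $D^*=\max_{l\in\mathcal L}\max_{\phi\in\mathcal I(l)}\max_{l'\in\phi}|D_{\mathcal L}(l,l')|$ (taken to be $0$ if there are no collision sets). A schedule is a map $S:\mathcal L\times\mathbb Z\to\{0,1\}$. For $(l,t)\in\mathcal L\times\mathbb Z$, $S(l,t)$ has a collision if there exists $\phi\in\mathcal I(l)$ such that $S(l',t+D_{\mathcal L}(l,l'))=1$ for every $l'\in\phi$; otherwise $S(l,t)$ is collision free. $S$ is collision free if $S(l,t)$ is collision free for every $(l,t)$ with $S(l,t)=1$. $S$ has period $T_p\ge 1$ if $S(l,t)=S(l,t+T_p)$ for all $(l,t)$. For a schedule $S$ and link $l$, $R_S(l)=\lim_{T\to\infty}\frac1T\sum_{t=0}^{T-1}\iota\big(S(l,t)=1\text{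 and }S(l,t)\text{ is collision free}\big)$ when the limit exists ($\iota$ is the indicator); if it exists for all $l$, $R_S=(R_S(l))_{l\in\mathcal L}$ is the rate vector of $S$. Vectors/matrices are compared entrywise ($A\preccurlyeq B$ iff each entry of $A$ is at most the corresponding entry of $B$), and $R-\epsilon$ means subtracting $\epsilon$ from every entry. A nonnegative vector $R\in[0,\infty)^{\mathcal L}$ is achievable if for every $\epsilon>0$ there is a schedule $S$ whose rate vector exists and satisfies $R_S\succcurlyeq R-\epsilon$; the rate region $\mathcal R^{\mathcal N}$ is the set of all achievable nonnegative vectors. *)

theory Defs
  imports "HOL-Analysis.Analysis"
begin

text \<open>A network (L, I, D): L finite nonempty link set, I l the collision profile
  of link l (collection of nonempty subsets of L), D l l' the integer delay
  (only meaningful when l' lies in some collision set of l).\<close>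

definition network :: "'l set \<Rightarrow> ('l \<Rightarrow> 'l set set) \<Rightarrow> ('l \<Rightarrow> 'l \<Rightarrow> int) \<Rightarrow> bool" where
  "network L I D \<longleftrightarrow> finite L \<and> L \<noteq> {} \<and>
     (\<forall>l\<in>L. \<forall>\<phi>\<in>I l. \<phi> \<noteq> {} \<and> \<phi> \<subseteq> L)"

type_synonym 'l schedule = "'l \<Rightarrow> int \<Rightarrow> bool"

definition has_collision :: "('l \<Rightarrow> 'l set set) \<Rightarrow> ('l \<Rightarrow> 'l \<Rightarrow> int) \<Rightarrow> 'l schedule \<Rightarrow> 'l \<Rightarrow> int \<Rightarrow> bool" where
  "has_collision I D S l t \<longleftrightarrow> (\<exists>\<phi>\<in>I l. \<forall>l'\<in>\<phi>. S l' (t + D l l'))"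

definition collision_free_sched :: "'l set \<Rightarrow> ('l \<Rightarrow> 'l set set) \<Rightarrow> ('l \<Rightarrow> 'l \<Rightarrow> int) \<Rightarrow> 'l schedule \<Rightarrow> bool" where
  "collision_free_sched L I D S \<longleftrightarrow> (\<forall>l\<in>L. \<forall>t. S l t \<longrightarrow> \<not> has_collision I D S l t)"

definition has_period :: "'l set \<Rightarrow> 'l schedule \<Rightarrow> nat \<Rightarrow> bool" where
  "has_period L S Tp \<longleftrightarrow> Tp \<ge> 1 \<and> (\<forall>l\<in>L. \<forall>t. S l t = S l (t + int Tp))"

definition succ_count :: "('l \<Rightarrow> 'l set set) \<Rightarrow> ('l \<Rightarrow> 'l \<Rightarrow> int) \<Rightarrow> 'l schedule \<Rightarrow> 'l \<Rightarrow> nat \<Rightarrow> real" where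
  "succ_count I D S l T = real (card {t \<in> {0..<T}. S l (int t) \<and> \<not> has_collision I D S l (int t)})"

definition link_rate :: "('l \<Rightarrow> 'l set set) \<Rightarrow> ('l \<Rightarrow> 'l \<Rightarrow> int) \<Rightarrow> 'l schedule \<Rightarrow> 'l \<Rightarrow> real \<Rightarrow> bool" where
  "link_rate I D S l r \<longleftrightarrow> ((\<lambda>T. succ_count I D S l T / real T) \<longlongrightarrow> r) sequentially"

definition rate_vector :: "'l set \<Rightarrow> ('l \<Rightarrow> 'l set set) \<Rightarrow> ('l \<Rightarrow> 'l \<Rightarrow> int) \<Rightarrow> 'l schedule \<Rightarrow> ('l \<Rightarrow> real) \<Rightarrow> bool" where
  "rate_vector L I D S Rs \<longleftrightarrow> (\<forall>l\<in>L. link_rate I D S l (Rs l))"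

definition achievable :: "'l set \<Rightarrow> ('l \<Rightarrow> 'l set set) \<Rightarrow> ('l \<Rightarrow> 'l \<Rightarrow> int) \<Rightarrow> ('l \<Rightarrow> real) \<Rightarrow> bool" where
  "achievable L I D R \<longleftrightarrow> (\<forall>l\<in>L. R l \<ge> 0) \<and>
     (\<forall>\<epsilon>>0. \<exists>S Rs. rate_vector L I D S Rs \<and> (\<forall>l\<in>L. Rs l \<ge> R l - \<epsilon>))"

definition rate_region :: "'l set \<Rightarrow> ('l \<Rightarrow> 'l set set) \<Rightarrow> ('l \<Rightarrow> 'l \<Rightarrow> int) \<Rightarrow> ('l \<Rightarrow> real) set" where
  "rate_region L I D = {R. achievable L I D R}"

end

theory Submission
  imports Defs
begin

lemma cnt_shift:
  fixes f :: "nat \<Rightarrow> bool"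
  assumes "\<forall>n. f (n+T) = f n"
  shows "card {t\<in>{0..<T+m}. f t} = card {t\<in>{0..<T}. f t} + card {t\<in>{0..<m}. f t}"
proof -
  have e: "{t\<in>{0..<T+m}. f t} = {t\<in>{0..<T}. f t} \<union> (\<lambda>t. t+T) ` {t\<in>{0..<m}. f t}"
  proof (rule set_eqI, rule iffI)
    fix x assume x: "x \<in> {t\<in>{0..<T+m}. f t}"
    show "x \<in> {t\<in>{0..<T}. f t} \<union> (\<lambda>t. t+T) ` {t\<in>{0..<m}. f t}"
    proof (cases "x < T")
      case True then show ?thesis using x by auto
    next
      case False
      then have xe: "x = (x - T) + T" by simp
      have "x < T + m" using x by simp
      then have "x - T < m" using False by linarith
      moreover have "f (x - T)"
      proof -
        have "f ((x-T)+T) = f (x-T)" using assms by blast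
        then show ?thesis using x xe by simp
      qed
      ultimately have "x - T \<in> {t\<in>{0..<m}. f t}" by simp
      then show ?thesis using xe by blast
    qed
  next
    fix x assume "x \<in> {t\<in>{0..<T}. f t} \<union> (\<lambda>t. t+T) ` {t\<in>{0..<m}. f t}"
    then show "x \<in> {t\<in>{0..<T+m}. f t}" using assms by auto
  qed
  have "card ({t\<in>{0..<T}. f t} \<union> (\<lambda>t. t+T) ` {t\<in>{0..<m}. f t}) =
     card {t\<in>{0..<T}. f t} + card ((\<lambda>t. t+T) ` {t\<in>{0..<m}. f t})"
    by (rule card_Un_disjoint) auto
  moreover have "card ((\<lambda>t. t+T) ` {t\<in>{0..<m}. f t}) = card {t\<in>{0..<m}. f t}"
    by (rule card_image) (auto simp: inj_on_def)
  ultimately show ?thesis using e by simp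
qed
lemma cnt_div:
  fixes f :: "nat \<Rightarrow> bool"
  assumes "\<forall>n. f (n+T) = f n" "T > 0"
  shows "card {t\<in>{0..<N}. f t} = (N div T) * card {t\<in>{0..<T}. f t} + card {t\<in>{0..<N mod T}. f t}"
proof (induction N rule: less_induct)
  case (less N)
  show ?case
  proof (cases "N < T")
    case True then show ?thesis by simp
  next
    case False
    have IH: "card {t\<in>{0..<N-T}. f t} = ((N-T) div T) * card {t\<in>{0..<T}. f t} + card {t\<in>{0..<(N-T) mod T}. f t}"
      using less False assms(2) by simp
    have "card {t\<in>{0..<N}. f t} = card {t\<in>{0..<T+(N-T)}. f t}" using False by simp
    also have "\<dots> = card {t\<in>{0..<T}. f t} + card {t\<in>{0..<N-T}. f t}" by (rule cnt_shift[OF assms(1)])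
    finally show ?thesis using IH False assms(2) le_div_geq[of T N] le_mod_geq[of T N] by simp
  qed
qed

lemma periodic_limit:
  fixes f :: "nat \<Rightarrow> bool"
  assumes "\<forall>n. f (n+T) = f n" "T > 0"
  shows "((\<lambda>N. real (card {t\<in>{0..<N}. f t}) / real N) \<longlongrightarrow> real (card {t\<in>{0..<T}. f t}) / real T) sequentially"
proof -
  define c where "c = card {t\<in>{0..<T}. f t}"
  have "card {t\<in>{0..<T}. f t} \<le> card {0..<T}" by (rule card_mono) auto
  then have cT: "c \<le> T" unfolding c_def by simp
  have bound: "norm (real (card {t\<in>{0..<N}. f t}) / real N - real c / real T) \<le> real T / real N" if "N > 0" for N
  proof -
    define q where "q = N div T"
    define r where "r = N mod T"
    define cr where "cr = card {t\<in>{0..<r}. f t}"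
    have "N = q * T + r" unfolding q_def r_def by simp
    then have "real N = real (q * T + r)" by simp
    then have Nq: "real N = real q * real T + real r" by simp
    have rT: "r < T" unfolding r_def using assms(2) by simp
    have "card {t\<in>{0..<r}. f t} \<le> card {0..<r}" by (rule card_mono) auto
    then have crr: "cr \<le> r" unfolding cr_def by simp
    have cnt: "real (card {t\<in>{0..<N}. f t}) = real q * real c + real cr"
      using cnt_div[OF assms, of N] unfolding q_def r_def cr_def c_def by simp
    have "real (card {t\<in>{0..<N}. f t}) - real N * real c / real T = real cr - real r * real c / real T"
      unfolding cnt Nq using assms(2) by (simp add: field_simps)
    moreover have "0 \<le> real r * real c / real T" by simp
    moreover have "real r * real c / real T \<le> real r"
      using cT assms(2) by (simp add: field_simps mult_right_mono)
    ultimately have d: "\<bar>real (card {t\<in>{0..<N}. f t}) - real N * real c / real T\<bar> \<le> real T"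
      using crr rT by linarith
    have "real (card {t\<in>{0..<N}. f t}) / real N - real c / real T
          = (real (card {t\<in>{0..<N}. f t}) - real N * real c / real T) / real N"
      using that by (simp add: field_simps)
    then have "norm (real (card {t\<in>{0..<N}. f t}) / real N - real c / real T)
        = \<bar>real (card {t\<in>{0..<N}. f t}) - real N * real c / real T\<bar> / real N"
      by simp
    also have "\<dots> \<le> real T / real N" using d that by (simp add: divide_right_mono)
    finally show ?thesis .
  qed
  have "((\<lambda>N. real (card {t\<in>{0..<N}. f t}) / real N - real c / real T) \<longlongrightarrow> 0) sequentially"
  proof (rule Lim_null_comparison)
    show "\<forall>\<^sub>F N in sequentially. norm (real (card {t\<in>{0..<N}. f t}) / real N - real c / real T) \<le> real T / real N"
      by (rule eventually_mono[OF eventually_gt_at_top[of 0]]) (rule bound)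
    show "((\<lambda>N. real T / real N) \<longlongrightarrow> 0) sequentially" by (rule lim_const_over_n)
  qed
  then show ?thesis unfolding c_def by (simp add: LIM_zero_iff)
qed

lemma mod_shift_int:
  fixes t d T :: int
  assumes "T > 0" "0 \<le> t mod T + d" "t mod T + d < T"
  shows "(t + d) mod T = t mod T + d"
proof -
  have "(t + d) mod T = (t mod T + d) mod T" by (simp add: mod_add_left_eq)
  also have "\<dots> = t mod T + d" using assms by (simp add: mod_pos_pos_trivial)
  finally show ?thesis .
qed

theorem theorem1:
  fixes L :: "'l set" and I :: "'l \<Rightarrow> 'l set set" and D :: "'l \<Rightarrow> 'l \<Rightarrow> int"
    and R :: "'l \<Rightarrow> real" and \<epsilon> :: real
  assumes "network L I D"
    and "R \<in> rate_region L I D"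
    and "\<epsilon> > 0"
  shows "\<exists>S Tp Rs. collision_free_sched L I D S \<and> has_period L S Tp \<and>
           rate_vector L I D S Rs \<and> (\<forall>l\<in>L. Rs l \<ge> R l - \<epsilon>)"
proof -
  have finL: "finite L" and sub: "\<And>l \<phi>. l \<in> L \<Longrightarrow> \<phi> \<in> I l \<Longrightarrow> \<phi> \<subseteq> L"
    using assms(1) unfolding network_def by auto
  have "achievable L I D R" using assms(2) unfolding rate_region_def by simp
  then obtain S Rs where rv: "rate_vector L I D S Rs" and ge: "\<forall>l\<in>L. Rs l \<ge> R l - \<epsilon>/2"
    unfolding achievable_def using assms(3) half_gt_zero by blast
  define G :: int where "G = Max ((\<lambda>(l,l'). \<bar>D l l'\<bar>) ` (L \<times> L) \<union> {0})"
  have finG: "finite ((\<lambda>(l,l'). \<bar>D l l'\<bar>) ` (L \<times> L) \<union> {0})" using finL by simp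
  have G0: "G \<ge> 0" unfolding G_def using finG by (simp add: Max_ge)
  have GD: "\<bar>D l l'\<bar> \<le> G" if "l \<in> L" "l' \<in> L" for l l'
    unfolding G_def by (rule Max_ge[OF finG]) (use that in force)
  define g where "g = nat G"
  have gG: "int g = G" using G0 unfolding g_def by simp
  have ev1: "\<forall>\<^sub>F T in sequentially. \<forall>l\<in>L. succ_count I D S l T / real T > Rs l - \<epsilon>/4"
  proof (rule eventually_ball_finite[OF finL], rule ballI)
    fix l assume "l \<in> L"
    then have "((\<lambda>T. succ_count I D S l T / real T) \<longlongrightarrow> Rs l) sequentially"
      using rv unfolding rate_vector_def link_rate_def by simp
    then show "\<forall>\<^sub>F T in sequentially. succ_count I D S l T / real T > Rs l - \<epsilon>/4"
      by (rule order_tendstoD(1)) (use assms(3) in simp)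
  qed
  have ev2: "\<forall>\<^sub>F T in sequentially. (2 * real g) / real T < \<epsilon>/4"
    by (rule order_tendstoD(2)[OF lim_const_over_n]) (use assms(3) in simp)
  have ev3: "\<forall>\<^sub>F T in sequentially. T > 2 * g + 1" by (rule eventually_gt_at_top)
  from eventually_conj[OF ev1 eventually_conj[OF ev2 ev3]] obtain T where
    T1: "\<forall>l\<in>L. succ_count I D S l T / real T > Rs l - \<epsilon>/4" and
    T2: "(2 * real g) / real T < \<epsilon>/4" and T3: "T > 2 * g + 1"
    unfolding eventually_sequentially by blast
  have Tpos: "T > 0" using T3 by simp
  define P where "P l u = (G \<le> u \<and> u + G < int T \<and> S l u \<and> \<not> has_collision I D S l u)" for l u
  define S' where "S' l t = P l (t mod int T)" for l t
  define Rs' where "Rs' l = real (card {t\<in>{0..<T}. P l (int t)}) / real T" for l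
  have cf: "collision_free_sched L I D S'"
    unfolding collision_free_sched_def
  proof (intro ballI allI impI notI)
    fix l t assume l: "l \<in> L" and st: "S' l t" and hc: "has_collision I D S' l t"
    define u where "u = t mod int T"
    have Pu: "P l u" using st unfolding S'_def u_def .
    obtain \<phi> where ph: "\<phi> \<in> I l" and all: "\<forall>l'\<in>\<phi>. S' l' (t + D l l')"
      using hc unfolding has_collision_def by blast
    have "has_collision I D S l u" unfolding has_collision_def
    proof (intro bexI[OF _ ph] ballI)
      fix l' assume l': "l' \<in> \<phi>"
      then have "l' \<in> L" using sub[OF l ph] by auto
      then have b: "\<bar>D l l'\<bar> \<le> G" using GD l by simp
      have eq: "(t + D l l') mod int T = u + D l l'"
        unfolding u_def using Pu b Tpos unfolding P_def u_def
        by (intro mod_shift_int) auto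
      have "P l' ((t + D l l') mod int T)" using all l' unfolding S'_def by blast
      then have "P l' (u + D l l')" unfolding eq .
      then show "S l' (u + D l l')" unfolding P_def by simp
    qed
    then show False using Pu unfolding P_def by simp
  qed
  have per: "has_period L S' T" unfolding has_period_def S'_def using Tpos by simp
  have rate: "rate_vector L I D S' Rs'" unfolding rate_vector_def link_rate_def
  proof
    fix l assume l: "l \<in> L"
    have sc: "succ_count I D S' l N = real (card {t\<in>{0..<N}. S' l (int t)})" for N
    proof -
      have "{t \<in> {0..<N}. S' l (int t) \<and> \<not> has_collision I D S' l (int t)} = {t\<in>{0..<N}. S' l (int t)}"
        using cf l unfolding collision_free_sched_def by auto
      then show ?thesis unfolding succ_count_def by simp
    qed
    have pf: "\<forall>n. S' l (int (n + T)) = S' l (int n)" unfolding S'_def by simp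
    have cT: "{t\<in>{0..<T}. S' l (int t)} = {t\<in>{0..<T}. P l (int t)}"
      unfolding S'_def by (auto simp: mod_pos_pos_trivial)
    show "((\<lambda>N. succ_count I D S' l N / real N) \<longlongrightarrow> Rs' l) sequentially"
      unfolding sc Rs'_def using periodic_limit[OF pf Tpos] cT by simp
  qed
  have bnd: "Rs' l \<ge> R l - \<epsilon>" if l: "l \<in> L" for l
  proof -
    define A where "A = {t \<in> {0..<T}. S l (int t) \<and> \<not> has_collision I D S l (int t)}"
    define B where "B = {t\<in>{0..<T}. P l (int t)}"
    have "A \<subseteq> B \<union> {0..<g} \<union> {T-g..<T}"
      unfolding A_def B_def P_def using gG by auto
    then have "card A \<le> card (B \<union> {0..<g} \<union> {T-g..<T})" by (intro card_mono) (auto simp: B_def)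
    also have "\<dots> \<le> card B + card {0..<g} + card {T-g..<T}"
      using card_Un_le[of "B \<union> {0..<g}" "{T-g..<T}"] card_Un_le[of B "{0..<g}"] by linarith
    also have "\<dots> \<le> card B + 2 * g" using T3 by simp
    finally have "real (card A) \<le> real (card B) + 2 * real g" by linarith
    then have "real (card A) / real T \<le> Rs' l + 2 * real g / real T"
      unfolding Rs'_def B_def using Tpos by (simp add: field_simps)
    moreover have "real (card A) / real T > Rs l - \<epsilon>/4"
      using T1 l unfolding succ_count_def A_def by simp
    ultimately show ?thesis using T2 ge l by fastforce
  qed
  show ?thesis using cf per rate bnd by blast
qed

end
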